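(* For any finite simple graphs $G$ and $H$ without isolated vertices, $$\gamma_{tR}(G\times H)\le 2\gamma_{t}(G)\gamma_{t}(H).$$
   Context: A set $D\subseteq V(G)$ is total dominating if every vertex of $G$ has a neighbor in $D$; $\gamma_t(G)$ is the minimum size of a total dominating set. A total Roman dominating function on $G$ is a map $f:V(G)\to\{0,1,2\}$ such that every vertex with label 0 has a neighbor with label 2 and the subgraph induced by vertices with positive labels has no isolated vertices; $\gamma_{tR}(G)$ is the minimum of $\sum_v f(v)$ over such $f$. The direct product $G\times H$ has vertex set $V(G)\times V(H)$, with $(g,h)(g',h')$ an edge iff $gg'\in E(G)$ and $hh'\in E(H)$. *)

theory Defs
  imports Main
begin

definition simple_graph :: "'a set \<Rightarrow> ('a \<Rightarrow> 'a \<Rightarrow> bool) \<Rightarrow> bool" where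
  "simple_graph V E \<longleftrightarrow> finite V \<and> (\<forall>x y. E x y \<longrightarrow> x \<in> V \<and> y \<in> V)
     \<and> (\<forall>x y. E x y \<longrightarrow> E y x) \<and> (\<forall>x. \<not> E x x)"

definition no_isolated :: "'a set \<Rightarrow> ('a \<Rightarrow> 'a \<Rightarrow> bool) \<Rightarrow> bool" where
  "no_isolated V E \<longleftrightarrow> (\<forall>v\<in>V. \<exists>u. E v u)"

definition total_dominating :: "'a set \<Rightarrow> ('a \<Rightarrow> 'a \<Rightarrow> bool) \<Rightarrow> 'a set \<Rightarrow> bool" where
  "total_dominating V E D \<longleftrightarrow> D \<subseteq> V \<and> (\<forall>v\<in>V. \<exists>u\<in>D. E v u)"

definition gamma_t :: "'a set \<Rightarrow> ('a \<Rightarrow> 'a \<Rightarrow> bool) \<Rightarrow> nat" where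
  "gamma_t V E = Min {card D | D. total_dominating V E D}"

definition total_roman_dom :: "'a set \<Rightarrow> ('a \<Rightarrow> 'a \<Rightarrow> bool) \<Rightarrow> ('a \<Rightarrow> nat) \<Rightarrow> bool" where
  "total_roman_dom V E f \<longleftrightarrow>
     (\<forall>v\<in>V. f v \<le> 2) \<and> (\<forall>v. v \<notin> V \<longrightarrow> f v = 0)
     \<and> (\<forall>v\<in>V. f v = 0 \<longrightarrow> (\<exists>u. E v u \<and> f u = 2))
     \<and> (\<forall>v\<in>V. f v > 0 \<longrightarrow> (\<exists>u. E v u \<and> f u > 0))"

definition gamma_tR :: "'a set \<Rightarrow> ('a \<Rightarrow> 'a \<Rightarrow> bool) \<Rightarrow> nat" where
  "gamma_tR V E = Min {(\<Sum>v\<in>V. f v) | f. total_roman_dom V E f}"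

definition direct_prod_edge ::
  "('a \<Rightarrow> 'a \<Rightarrow> bool) \<Rightarrow> ('b \<Rightarrow> 'b \<Rightarrow> bool) \<Rightarrow> ('a \<times> 'b) \<Rightarrow> ('a \<times> 'b) \<Rightarrow> bool" where
  "direct_prod_edge E F p q \<longleftrightarrow> E (fst p) (fst q) \<and> F (snd p) (snd q)"

end

theory Submission
  imports Defs
begin

lemma gamma_t_witness:
  assumes "simple_graph V E" and "no_isolated V E"
  shows "\<exists>D. total_dominating V E D \<and> card D = gamma_t V E"
proof -
  let ?S = "{card D | D. total_dominating V E D}"
  have fin: "finite V" using assms(1) by (simp add: simple_graph_def)
  have "total_dominating V E V"
    using assms unfolding total_dominating_def simple_graph_def no_isolated_def by blast
  hence ne: "?S \<noteq> {}" by blast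
  have "?S \<subseteq> {..card V}"
    using fin by (auto simp: total_dominating_def intro: card_mono)
  hence "finite ?S" using finite_subset by blast
  from Min_in[OF this ne] show ?thesis unfolding gamma_t_def by auto
qed

theorem corollary2p4:
  fixes V :: "'a set" and E :: "'a \<Rightarrow> 'a \<Rightarrow> bool"
    and W :: "'b set" and F :: "'b \<Rightarrow> 'b \<Rightarrow> bool"
  assumes "simple_graph V E" and "no_isolated V E"
    and "simple_graph W F" and "no_isolated W F"
  shows "gamma_tR (V \<times> W) (direct_prod_edge E F) \<le> 2 * gamma_t V E * gamma_t W F"
proof -
  obtain D where D: "total_dominating V E D" "card D = gamma_t V E"
    using gamma_t_witness[OF assms(1,2)] by blast
  obtain D' where D': "total_dominating W F D'" "card D' = gamma_t W F"
    using gamma_t_witness[OF assms(3,4)] by blast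
  have finV: "finite V" using assms(1) by (simp add: simple_graph_def)
  have finW: "finite W" using assms(3) by (simp add: simple_graph_def)
  have sub: "D \<times> D' \<subseteq> V \<times> W" using D(1) D'(1) by (auto simp: total_dominating_def)
  define f where "f = (\<lambda>p. if p \<in> D \<times> D' then (2::nat) else 0)"
  have dom: "\<exists>u\<in>D \<times> D'. direct_prod_edge E F p u" if pin: "p \<in> V \<times> W" for p
  proof -
    obtain a b where p: "p = (a,b)" "a \<in> V" "b \<in> W" using pin by (cases p) auto
    obtain u where "u \<in> D" "E a u" using D(1) p by (auto simp: total_dominating_def)
    moreover obtain u' where "u' \<in> D'" "F b u'" using D'(1) p by (auto simp: total_dominating_def)
    ultimately show ?thesis using p by (auto simp: direct_prod_edge_def)
  qed
  have trd: "total_roman_dom (V \<times> W) (direct_prod_edge E F) f"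
    unfolding total_roman_dom_def
  proof (intro conjI ballI allI impI)
    fix v assume "v \<in> V \<times> W" "f v = 0"
    then show "\<exists>u. direct_prod_edge E F v u \<and> f u = 2" using dom[of v] by (auto simp: f_def)
  next
    fix v assume "v \<in> V \<times> W" "0 < f v"
    then show "\<exists>u. direct_prod_edge E F v u \<and> 0 < f u" using dom[of v] by (auto simp: f_def)
  qed (use sub in \<open>auto simp: f_def\<close>)
  have sumf: "(\<Sum>v\<in>V \<times> W. f v) = 2 * card (D \<times> D')"
  proof -
    have "(\<Sum>v\<in>V \<times> W. f v) = (\<Sum>v\<in>V \<times> W. if v \<in> D \<times> D' then 2 else 0)" by (simp add: f_def)
    also have "\<dots> = (\<Sum>v\<in>(V \<times> W) \<inter> (D \<times> D'). 2)"
      using finV finW by (simp only: sum.inter_restrict finite_cartesian_product)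
    also have "(V \<times> W) \<inter> (D \<times> D') = D \<times> D'" using sub by blast
    finally show ?thesis by simp
  qed
  let ?S = "{(\<Sum>v\<in>V \<times> W. g v) | g. total_roman_dom (V \<times> W) (direct_prod_edge E F) g}"
  have "?S \<subseteq> {..2 * card (V \<times> W)}"
  proof
    fix x assume "x \<in> ?S"
    then obtain g where g: "x = (\<Sum>v\<in>V \<times> W. g v)" "total_roman_dom (V \<times> W) (direct_prod_edge E F) g" by blast
    have "(\<Sum>v\<in>V \<times> W. g v) \<le> (\<Sum>v\<in>V \<times> W. 2)"
      using g(2) by (intro sum_mono) (auto simp: total_roman_dom_def)
    then show "x \<in> {..2 * card (V \<times> W)}" using g(1) by simp
  qed
  hence "finite ?S" using finite_subset by blast
  moreover have "(\<Sum>v\<in>V \<times> W. f v) \<in> ?S" using trd by blast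
  ultimately have "gamma_tR (V \<times> W) (direct_prod_edge E F) \<le> (\<Sum>v\<in>V \<times> W. f v)"
    unfolding gamma_tR_def by (rule Min_le)
  also have "\<dots> = 2 * gamma_t V E * gamma_t W F" using sumf D(2) D'(2) by (simp add: card_cartesian_product)
  finally show ?thesis .
qed

end
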